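(* Let $T_0=0$ and let $T_1,T_2,\dots$ be random variables such that $T_{i+1}-T_i$, $i\ge0$, are i.i.d. exponential with parameter $1$. Let $\beta>0$, $K_0>0$ and let $(Y_k)_{k\in\mathbb{N}^\ast}$ be non-negative random variables with $\mathbb{E}[e^{\beta T_k}Y_k]\le K_0$ for all $k\in\mathbb{N}^\ast$. Then for every $c\in(0,1)$, almost surely $Y_k=o(e^{-\beta ck})$ as $k\to\infty$, i.e. $e^{\beta ck}Y_k\to0$ almost surely. *)

theory Defs
  imports "HOL-Probability.Probability"
begin

end

theory Submission
  imports Defs
begin

lemma aux_r: fixes l :: real assumes "0 < l" "l < 1" shows "exp (l * (1 - l)) < 1 + l"
proof -
  have "exp (l * (1 - l)) \<le> 1 + l * (1 - l) + (l * (1 - l))\<^sup>2"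
    by (rule exp_bound) (use assms in \<open>auto intro: mult_le_one\<close>)
  also have "\<dots> < 1 + l"
  proof -
    have "(1 - l) * (1 - l) < 1" using assms
      by (smt (verit) mult_less_cancel_right1)
    then have "(l*l) * ((1 - l) * (1 - l)) < (l*l) * 1" using assms by (intro mult_strict_left_mono) auto
    then show ?thesis by (simp add: power2_eq_square algebra_simps)
  qed
  finally show ?thesis .
qed

theorem proposition5:
  fixes M :: "'a measure"
    and T :: "nat \<Rightarrow> 'a \<Rightarrow> real"
    and Y :: "nat \<Rightarrow> 'a \<Rightarrow> real"
    and \<beta> K\<^sub>0 c :: real
  assumes "prob_space M"
    and T0: "\<And>x. x \<in> space M \<Longrightarrow> T 0 x = 0"
    and T_meas: "\<And>i. T i \<in> borel_measurable M"
    and indep: "prob_space.indep_vars M (\<lambda>_. borel) (\<lambda>i x. T (Suc i) x - T i x) UNIV"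
    and expo: "\<And>i. distributed M lborel (\<lambda>x. T (Suc i) x - T i x)
                     (\<lambda>t. ennreal (exponential_density 1 t))"
    and \<beta>: "\<beta> > 0" and K0: "K\<^sub>0 > 0"
    and Y_meas: "\<And>k. k \<ge> 1 \<Longrightarrow> Y k \<in> borel_measurable M"
    and Y_nonneg: "\<And>k x. k \<ge> 1 \<Longrightarrow> x \<in> space M \<Longrightarrow> Y k x \<ge> 0"
    and bound: "\<And>k. k \<ge> 1 \<Longrightarrow>
                  (\<integral>\<^sup>+ x. ennreal (exp (\<beta> * T k x) * Y k x) \<partial>M) \<le> ennreal K\<^sub>0"
    and c: "0 < c" "c < 1"
  shows "AE x in M. (\<lambda>k. exp (\<beta> * c * real k) * Y k x) \<longlonglongrightarrow> 0"
proof -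
  interpret P: prob_space M by fact
  define D where "D i x = T (Suc i) x - T i x" for i x
  have Deq: "(\<lambda>i x. T (Suc i) x - T i x) = D" by (simp add: D_def fun_eq_iff)
  define a where "a = (1 + c) / 2"
  define l where "l = (1 - c) / 2"
  define r where "r = exp (l * a) / (1 + l)"
  define q where "q = exp (- \<beta> * (a - c))"
  have l_pos: "0 < l" and ca: "c < a" and a1: "a < 1" and l_le: "l \<le> 1" and a_pos: "0 < a"
    using c by (auto simp: l_def a_def)
  have la: "l * a = l * (1 - l)" by (simp add: l_def a_def field_simps)
  have r_pos: "0 < r" using l_pos by (simp add: r_def)
  have r1: "r < 1"
  proof -
    have "l < 1" using c by (simp add: l_def)
    then have "exp (l * a) < 1 + l" using aux_r[of l] l_pos unfolding la by simp
    then show ?thesis using l_pos by (simp add: r_def)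
  qed
  have q_pos: "0 < q" by (simp add: q_def)
  have q1: "q < 1" using \<beta> ca by (simp add: q_def)
  have D_meas[measurable]: "D i \<in> borel_measurable M" for i
    unfolding D_def using T_meas by measurable
  have Tsum: "x \<in> space M \<Longrightarrow> T k x = (\<Sum>i<k. D i x)" for k x
    by (induction k) (auto simp: T0 D_def)
  have expD: "(\<integral>\<^sup>+x. ennreal (exp (- l * D i x)) \<partial>M) = ennreal (1 / (1 + l))" for i
  proof -
    have "(\<integral>\<^sup>+x. ennreal (exp (- l * D i x)) \<partial>M) =
        (\<integral>\<^sup>+t. ennreal (exponential_density 1 t) * ennreal (exp (- l * t)) \<partial>lborel)"
      using distributed_nn_integral[OF expo[of i, unfolded Deq], of "\<lambda>t. ennreal (exp (- l * t))"]
      by (simp add: D_def)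
    also have "\<dots> = (\<integral>\<^sup>+t. ennreal (1 / (1 + l)) * ennreal (exponential_density (1 + l) t) \<partial>lborel)"
    proof (intro nn_integral_cong)
      fix t :: real
      have "exp (- t) * exp (- (l * t)) = exp (- (t * (1 + l)))"
        by (simp add: exp_add[symmetric] algebra_simps)
      then show "ennreal (exponential_density 1 t) * ennreal (exp (- l * t)) =
          ennreal (1 / (1 + l)) * ennreal (exponential_density (1 + l) t)"
        using l_pos by (auto simp: exponential_density_def ennreal_mult'[symmetric] ennreal_mult[symmetric])
    qed
    also have "\<dots> = ennreal (1 / (1 + l)) * (\<integral>\<^sup>+t. ennreal (exponential_density (1 + l) t) \<partial>lborel)"
      by (rule nn_integral_cmult) auto
    also have "(\<integral>\<^sup>+t. ennreal (exponential_density (1 + l) t) \<partial>lborel) = 1"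
    proof -
      have "emeasure (density lborel (\<lambda>x. ennreal (exponential_density (1 + l) x))) UNIV = 1"
        using prob_space.emeasure_space_1[OF prob_space_exponential_density[of "1 + l"]] l_pos by simp
      then show ?thesis by (subst (asm) emeasure_density) auto
    qed
    finally show ?thesis by simp
  qed
  have expT: "(\<integral>\<^sup>+x. ennreal (exp (- l * T k x)) \<partial>M) = ennreal ((1 / (1 + l)) ^ k)" for k
  proof -
    have "(\<integral>\<^sup>+x. ennreal (exp (- l * T k x)) \<partial>M) = (\<integral>\<^sup>+x. (\<Prod>i\<in>{..<k}. ennreal (exp (- l * D i x))) \<partial>M)"
      by (intro nn_integral_cong) (simp add: Tsum sum_distrib_left exp_sum prod_ennreal)
    also have "\<dots> = (\<Prod>i\<in>{..<k}. \<integral>\<^sup>+x. ennreal (exp (- l * D i x)) \<partial>M)"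
    proof (rule P.indep_vars_nn_integral)
      show "P.indep_vars (\<lambda>_. borel) (\<lambda>i x. ennreal (exp (- l * D i x))) {..<k}"
        by (rule P.indep_vars_compose2[where X=D and M'="\<lambda>_. borel",
              OF P.indep_vars_subset[OF indep[unfolded Deq]]]) auto
    qed auto
    also have "\<dots> = (\<Prod>i\<in>{..<k}. ennreal (1 / (1 + l)))"
      by (rule prod.cong[OF refl expD])
    also have "\<dots> = ennreal ((1 / (1 + l)) ^ k)"
      using l_pos by (simp add: ennreal_power)
    finally show ?thesis .
  qed
  define Z where "Z k x = exp (\<beta> * T k x) * Y k x" for k x
  define X where "X k x = exp (\<beta> * c * real k) * Y k x" for k x
  define f where "f k x = min 1 (X k x)" for k x
  have f_nonneg: "k \<ge> 1 \<Longrightarrow> x \<in> space M \<Longrightarrow> 0 \<le> f k x" for k x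
    using Y_nonneg by (simp add: f_def X_def)
  have fle: "f k x \<le> q ^ k * Z k x + exp (l * a * real k) * exp (- l * T k x)"
    if k: "k \<ge> 1" and x: "x \<in> space M" for k x
  proof (cases "T k x \<ge> a * real k")
    case True
    have "f k x \<le> X k x" by (simp add: f_def)
    also have "X k x = Z k x * exp (\<beta> * (c * real k - T k x))"
      by (simp add: X_def Z_def exp_add[symmetric] algebra_simps)
    also have "\<dots> \<le> Z k x * exp (- \<beta> * (a - c) * real k)"
      using True \<beta> Y_nonneg[OF k x]
      by (intro mult_left_mono) (auto simp: Z_def algebra_simps)
    also have "exp (- \<beta> * (a - c) * real k) = q ^ k"
      by (simp add: q_def exp_of_nat_mult[symmetric] algebra_simps)
    finally show ?thesis by (simp add: mult.commute add_increasing2)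
  next
    case False
    have "f k x \<le> 1" by (simp add: f_def)
    also have "1 \<le> exp (l * a * real k) * exp (- l * T k x)"
      using False l_pos by (simp add: exp_add[symmetric] algebra_simps)
    finally show ?thesis using Y_nonneg[OF k x] q_pos
      by (smt (verit) Z_def exp_gt_zero mult_nonneg_nonneg zero_less_power)
  qed
  have intf: "(\<integral>\<^sup>+x. ennreal (f (Suc k) x) \<partial>M) \<le> ennreal (K\<^sub>0 * q ^ Suc k + r ^ Suc k)" for k
  proof -
    let ?n = "Suc k"
    have Ym[measurable]: "Y ?n \<in> borel_measurable M" using Y_meas by simp
    have "(\<integral>\<^sup>+x. ennreal (f ?n x) \<partial>M) \<le>
        (\<integral>\<^sup>+x. ennreal (q ^ ?n) * ennreal (Z ?n x) + ennreal (exp (l * a * real ?n)) * ennreal (exp (- l * T ?n x)) \<partial>M)"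
      using fle[of ?n] Y_nonneg[of ?n] q_pos
      by (intro nn_integral_mono) (auto simp: Z_def ennreal_mult[symmetric] ennreal_plus[symmetric] simp del: ennreal_plus)
    also have "\<dots> = ennreal (q ^ ?n) * (\<integral>\<^sup>+x. ennreal (Z ?n x) \<partial>M) + ennreal (exp (l * a * real ?n)) * (\<integral>\<^sup>+x. ennreal (exp (- l * T ?n x)) \<partial>M)"
      using T_meas by (subst nn_integral_add) (auto simp: Z_def nn_integral_cmult)
    also have "\<dots> \<le> ennreal (q ^ ?n) * ennreal K\<^sub>0 + ennreal (exp (l * a * real ?n)) * ennreal ((1 / (1 + l)) ^ ?n)"
      unfolding expT using bound[of ?n] by (intro add_mono mult_left_mono) (auto simp: Z_def)
    also have "\<dots> = ennreal (K\<^sub>0 * q ^ ?n + r ^ ?n)"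
    proof -
      have e: "exp (l * a * real ?n) = exp (l * a) ^ ?n"
        by (subst exp_of_nat_mult[symmetric]) (simp add: mult.commute)
      show ?thesis
        using q_pos K0 l_pos unfolding e
        by (simp add: ennreal_mult[symmetric] ennreal_plus[symmetric] r_def
            power_divide mult.commute del: ennreal_plus)
    qed
    finally show ?thesis .
  qed
  have f_meas[measurable]: "(\<lambda>x. ennreal (f (Suc k) x)) \<in> borel_measurable M" for k
  proof -
    have [measurable]: "Y (Suc k) \<in> borel_measurable M" using Y_meas by simp
    show ?thesis unfolding f_def X_def by measurable
  qed
  have sumfin: "(\<integral>\<^sup>+x. (\<Sum>k. ennreal (f (Suc k) x)) \<partial>M) \<noteq> \<infinity>"
  proof -
    have sm: "summable (\<lambda>k. K\<^sub>0 * q ^ Suc k + r ^ Suc k)"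
      using q_pos q1 r_pos r1
      by (intro summable_add summable_mult) (auto simp: power_Suc intro!: summable_mult summable_geometric)
    have "(\<integral>\<^sup>+x. (\<Sum>k. ennreal (f (Suc k) x)) \<partial>M) = (\<Sum>k. \<integral>\<^sup>+x. ennreal (f (Suc k) x) \<partial>M)"
      by (rule nn_integral_suminf) simp
    also have "\<dots> \<le> (\<Sum>k. ennreal (K\<^sub>0 * q ^ Suc k + r ^ Suc k))"
      using intf by (intro suminf_le) auto
    also have "\<dots> < \<infinity>"
      using ennreal_suminf_neq_top[OF sm] q_pos r_pos K0 by (simp add: top.not_eq_extremum)
    finally show ?thesis by simp
  qed
  have "AE x in M. (\<Sum>k. ennreal (f (Suc k) x)) \<noteq> \<infinity>"
    by (rule nn_integral_PInf_AE[OF _ sumfin]) simp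
  then show ?thesis
  proof (rule AE_mp[OF _ AE_I2[OF impI]])
    fix x assume x: "x \<in> space M" and fin: "(\<Sum>k. ennreal (f (Suc k) x)) \<noteq> \<infinity>"
    have "summable (\<lambda>k. f (Suc k) x)"
      using fin f_nonneg[OF _ x] by (intro summable_suminf_not_top) auto
    then have f0: "(\<lambda>k. f (Suc k) x) \<longlonglongrightarrow> 0" by (rule summable_LIMSEQ_zero)
    have "eventually (\<lambda>k. f (Suc k) x < 1) sequentially"
      using order_tendstoD(2)[OF f0] by simp
    then have "eventually (\<lambda>k. f (Suc k) x = X (Suc k) x) sequentially"
      by eventually_elim (auto simp: f_def)
    then have "(\<lambda>k. X (Suc k) x) \<longlonglongrightarrow> 0" by (rule Lim_transform_eventually[OF f0])
    then show "(\<lambda>k. exp (\<beta> * c * real k) * Y k x) \<longlonglongrightarrow> 0"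
      by (subst (asm) filterlim_sequentially_Suc) (simp add: X_def)
  qed
qed

end
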